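(* Let $C$ be a non-empty strictly convex cone in a topological real vector space $V$ and $f:C\to\mathbb{R}$ a non-negative positively homogeneous function ($f(\lambda x)=\lambda f(x)$ for $x\in C$, $\lambda>0$). Then for any real number $\alpha>1$ the following are equivalent: (1) $f$ is continuous and $f^{\alpha}$ is strictly convex. (2) $f$ is continuous and strictly quasi-convex. (3) $f$ is strictly sub-convex and $f^{-1}(0)\subseteq\{0\}$.
   Context: Topological real vector spaces are not assumed Hausdorff; $C$ carries the subspace topology. A cone is a subset $C$ with $\lambda C\subseteq C$ for all real $\lambda>0$ (it may or may not contain $0$). A function $g$ on a convex set $C$ is strictly convex if $g((1-t)x+ty)<(1-t)g(x)+tg(y)$ for all distinct $x,y\in C$, $t\in(0,1)$; strictly quasi-convex if $g((1-t)x+ty)<\max\{g(x),g(y)\}$ for such $x,y,t$. For $f:C\to\mathbb{R}$, $S_r(f)=\{x\in C: f(x)\le r\}$. For a subset $S$, $\mathrm{Aff}(S)$ is its affine hull; $\mathrm{ri}(S)$, $\mathrm{rc}(S)$ are the interior and closure of $S$ in the subspace topology of $\mathrm{Aff}(S)$. $]x,y[=\{(1-t)x+ty: t\in[0,1]\}\setminus\{x,y\}$. A subset $C$ is strictly convex if for any two distinct $x,y\in\mathrm{rc}(C)$, $]x,y[\subseteq\mathrm{ri}(C)$. $f$ is strictly sub-convex if $S_r(f)$ is strictly convex for every $r\in\mathbb{R}$. *)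

theory Defs
  imports "HOL-Analysis.Analysis"
begin

text \<open>A topological real vector space (not necessarily Hausdorff): addition and
scalar multiplication are jointly continuous (product topologies).\<close>
definition tvs_ops_continuous :: "('a::{real_vector,topological_space}) itself \<Rightarrow> bool" where
  "tvs_ops_continuous _ \<longleftrightarrow>
     continuous_on UNIV (\<lambda>p::'a \<times> 'a. fst p + snd p) \<and>
     continuous_on UNIV (\<lambda>p::real \<times> 'a. scaleR (fst p) (snd p))"

definition is_cone :: "'a::real_vector set \<Rightarrow> bool" where
  "is_cone C \<longleftrightarrow> (\<forall>x\<in>C. \<forall>c::real. c > 0 \<longrightarrow> c *\<^sub>R x \<in> C)"

definition ri :: "'a::{real_vector,topological_space} set \<Rightarrow> 'a set" where
  "ri S = (subtopology euclidean (affine hull S)) interior_of S"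

definition rc :: "'a::{real_vector,topological_space} set \<Rightarrow> 'a set" where
  "rc S = (subtopology euclidean (affine hull S)) closure_of S"

definition strictly_convex_set :: "'a::{real_vector,topological_space} set \<Rightarrow> bool" where
  "strictly_convex_set C \<longleftrightarrow>
     (\<forall>x\<in>rc C. \<forall>y\<in>rc C. x \<noteq> y \<longrightarrow> open_segment x y \<subseteq> ri C)"

definition strictly_convex_fun_on :: "'a::real_vector set \<Rightarrow> ('a \<Rightarrow> real) \<Rightarrow> bool" where
  "strictly_convex_fun_on C g \<longleftrightarrow> convex C \<and>
     (\<forall>x\<in>C. \<forall>y\<in>C. \<forall>t::real. x \<noteq> y \<longrightarrow> 0 < t \<longrightarrow> t < 1 \<longrightarrow>
        g ((1 - t) *\<^sub>R x + t *\<^sub>R y) < (1 - t) * g x + t * g y)"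

definition strictly_quasi_convex_on :: "'a::real_vector set \<Rightarrow> ('a \<Rightarrow> real) \<Rightarrow> bool" where
  "strictly_quasi_convex_on C g \<longleftrightarrow> convex C \<and>
     (\<forall>x\<in>C. \<forall>y\<in>C. \<forall>t::real. x \<noteq> y \<longrightarrow> 0 < t \<longrightarrow> t < 1 \<longrightarrow>
        g ((1 - t) *\<^sub>R x + t *\<^sub>R y) < max (g x) (g y))"

definition sublevel :: "'a set \<Rightarrow> ('a \<Rightarrow> real) \<Rightarrow> real \<Rightarrow> 'a set" where
  "sublevel C f r = {x\<in>C. f x \<le> r}"

definition strictly_sub_convex_on :: "'a::{real_vector,topological_space} set \<Rightarrow> ('a \<Rightarrow> real) \<Rightarrow> bool" where
  "strictly_sub_convex_on C f \<longleftrightarrow> (\<forall>r::real. strictly_convex_set (sublevel C f r))"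

end

theory Submission imports Defs begin
lemma ri_iff:
  "x \<in> ri S \<longleftrightarrow> x \<in> S \<and> (\<exists>U. open U \<and> x \<in> U \<and> U \<inter> affine hull S \<subseteq> S)"
proof
  assume "x \<in> ri S"
  then obtain T where T: "openin (subtopology euclidean (affine hull S)) T" "x \<in> T" "T \<subseteq> S"
    unfolding ri_def interior_of_def by auto
  then obtain U where "open U" "T = U \<inter> affine hull S" by (auto simp: openin_subtopology)
  thus "x \<in> S \<and> (\<exists>U. open U \<and> x \<in> U \<and> U \<inter> affine hull S \<subseteq> S)" using T by auto
next
  assume "x \<in> S \<and> (\<exists>U. open U \<and> x \<in> U \<and> U \<inter> affine hull S \<subseteq> S)"
  then obtain U where U: "x \<in> S" "open U" "x \<in> U" "U \<inter> affine hull S \<subseteq> S" by auto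
  have "openin (subtopology euclidean (affine hull S)) (U \<inter> affine hull S)"
    using U by (auto simp: openin_subtopology)
  moreover have "x \<in> U \<inter> affine hull S" using U by (auto intro: hull_inc)
  ultimately show "x \<in> ri S" unfolding ri_def interior_of_def using U by blast
qed

lemma rc_iff:
  "x \<in> rc S \<longleftrightarrow> x \<in> affine hull S \<and> (\<forall>U. open U \<longrightarrow> x \<in> U \<longrightarrow> (\<exists>y\<in>S. y \<in> U))"
proof
  assume x: "x \<in> rc S"
  hence xa: "x \<in> affine hull S" unfolding rc_def closure_of_def by auto
  show "x \<in> affine hull S \<and> (\<forall>U. open U \<longrightarrow> x \<in> U \<longrightarrow> (\<exists>y\<in>S. y \<in> U))"
  proof (intro conjI allI impI xa)
    fix U :: "'a set" assume "open U" "x \<in> U"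
    hence "openin (subtopology euclidean (affine hull S)) (U \<inter> affine hull S)" "x \<in> U \<inter> affine hull S"
      using xa by (auto simp: openin_subtopology)
    thus "\<exists>y\<in>S. y \<in> U" using x unfolding rc_def closure_of_def by blast
  qed
next
  assume H: "x \<in> affine hull S \<and> (\<forall>U. open U \<longrightarrow> x \<in> U \<longrightarrow> (\<exists>y\<in>S. y \<in> U))"
  show "x \<in> rc S" unfolding rc_def closure_of_def
  proof (safe)
    show "x \<in> topspace (subtopology euclidean (affine hull S))" using H by simp
  next
    fix T assume "x \<in> T" "openin (subtopology euclidean (affine hull S)) T"
    then obtain U where "open U" "T = U \<inter> affine hull S" by (auto simp: openin_subtopology)
    thus "\<exists>y\<in>S. y \<in> T" using H \<open>x \<in> T\<close> by (auto intro: hull_inc)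
  qed
qed

lemma aff_cont:
  assumes tvs: "tvs_ops_continuous TYPE('a::{real_vector,topological_space})"
  shows "continuous_on UNIV (\<lambda>x::'a. c *\<^sub>R x + d)"
proof -
  have A: "continuous_on UNIV (\<lambda>p::'a \<times> 'a. fst p + snd p)" and
       M: "continuous_on UNIV (\<lambda>p::real \<times> 'a. scaleR (fst p) (snd p))"
    using tvs unfolding tvs_ops_continuous_def by auto
  have 1: "continuous_on UNIV (\<lambda>x::'a. c *\<^sub>R x)"
  proof -
    have "continuous_on UNIV (\<lambda>x::'a. (\<lambda>p::real \<times> 'a. scaleR (fst p) (snd p)) ((\<lambda>x. (c, x)) x))"
      by (rule continuous_on_compose2[OF M continuous_on_Pair[OF continuous_on_const continuous_on_id]]) simp
    thus ?thesis by simp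
  qed
  have 2: "continuous_on UNIV (\<lambda>x::'a. (c *\<^sub>R x, d))"
    by (rule continuous_on_Pair[OF 1 continuous_on_const])
  have "continuous_on UNIV (\<lambda>x::'a. (\<lambda>p::'a \<times> 'a. fst p + snd p) ((\<lambda>x. (c *\<^sub>R x, d)) x))"
    by (rule continuous_on_compose2[OF A 2]) simp
  thus ?thesis by simp
qed

lemma line_cont:
  assumes tvs: "tvs_ops_continuous TYPE('a::{real_vector,topological_space})"
  shows "continuous_on UNIV (\<lambda>s::real. a + s *\<^sub>R (b::'a))"
proof -
  have A: "continuous_on UNIV (\<lambda>p::'a \<times> 'a. fst p + snd p)" and
       M: "continuous_on UNIV (\<lambda>p::real \<times> 'a. scaleR (fst p) (snd p))"
    using tvs unfolding tvs_ops_continuous_def by auto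
  have 1: "continuous_on UNIV (\<lambda>s::real. s *\<^sub>R b)"
  proof -
    have "continuous_on UNIV (\<lambda>s::real. (\<lambda>p::real \<times> 'a. scaleR (fst p) (snd p)) ((\<lambda>s. (s, b)) s))"
      by (rule continuous_on_compose2[OF M continuous_on_Pair[OF continuous_on_id continuous_on_const]]) simp
    thus ?thesis by simp
  qed
  have 2: "continuous_on UNIV (\<lambda>s::real. (a, s *\<^sub>R b))"
    by (rule continuous_on_Pair[OF continuous_on_const 1])
  have "continuous_on UNIV (\<lambda>s::real. (\<lambda>p::'a \<times> 'a. fst p + snd p) ((\<lambda>s. (a, s *\<^sub>R b)) s))"
    by (rule continuous_on_compose2[OF A 2]) simp
  thus ?thesis by simp
qed

lemma aff_open:
  assumes tvs: "tvs_ops_continuous TYPE('a::{real_vector,topological_space})"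
    and "open U" "c *\<^sub>R x + d \<in> U"
  shows "\<exists>V. open V \<and> x \<in> V \<and> (\<forall>y\<in>V. c *\<^sub>R y + (d::'a) \<in> U)"
proof -
  have "open ((\<lambda>x::'a. c *\<^sub>R x + d) -` U)"
    using open_vimage[OF assms(2) aff_cont[OF tvs]] .
  thus ?thesis using assms(3) by (intro exI[of _ "(\<lambda>x::'a. c *\<^sub>R x + d) -` U"]) auto
qed

lemma line_open:
  assumes tvs: "tvs_ops_continuous TYPE('a::{real_vector,topological_space})"
    and "open U" "a + s0 *\<^sub>R b \<in> U"
  shows "\<exists>e>0. \<forall>s. \<bar>s - s0\<bar> < e \<longrightarrow> a + s *\<^sub>R (b::'a) \<in> U"
proof -
  have "open ((\<lambda>s::real. a + s *\<^sub>R b) -` U)"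
    using open_vimage[OF assms(2) line_cont[OF tvs]] .
  moreover have "s0 \<in> (\<lambda>s::real. a + s *\<^sub>R b) -` U" using assms(3) by simp
  ultimately obtain e where "e > 0" "\<forall>y. dist y s0 < e \<longrightarrow> y \<in> (\<lambda>s::real. a + s *\<^sub>R b) -` U"
    unfolding open_dist by blast
  thus ?thesis by (auto simp: dist_real_def)
qed

lemma bern_powr:
  fixes x a :: real
  assumes "x \<ge> 0" "x \<noteq> 1" "a > 1"
  shows "1 + a * (x - 1) < x powr a"
proof -
  define g where "g = (\<lambda>x::real. x powr a - a * x)"
  have D: "DERIV g y :> (a * y powr (a - 1) - a)" if "y > 0" for y
    unfolding g_def using that
    by (auto intro!: derivative_eq_intros has_real_derivative_powr)
  have g1: "g 1 = 1 - a" by (simp add: g_def)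
  consider "x = 0" | "0 < x" "x < 1" | "x > 1" using assms by linarith
  thus ?thesis
  proof cases
    case 1 thus ?thesis using assms by simp
  next
    case 2
    obtain z where z: "x < z" "z < 1" "g 1 - g x = (1 - x) * (a * z powr (a - 1) - a)"
      using MVT2[of x 1 g "\<lambda>y. a * y powr (a - 1) - a"] D 2 by force
    have "z powr (a - 1) < 1 powr (a - 1)" using z 2 assms by (intro powr_less_mono2) auto
    hence "z powr (a - 1) < 1" by simp
    hence "(1 - x) * (a * z powr (a - 1) - a) < 0" using 2 assms
      by (intro mult_pos_neg) (auto simp: algebra_simps)
    thus ?thesis using z g1 unfolding g_def by (simp add: algebra_simps)
  next
    case 3
    obtain z where z: "1 < z" "z < x" "g x - g 1 = (x - 1) * (a * z powr (a - 1) - a)"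
      using MVT2[of 1 x g "\<lambda>y. a * y powr (a - 1) - a"] D 3 by force
    have "1 < z powr (a - 1)" using z assms by (intro gr_one_powr) auto
    hence "(x - 1) * (a * z powr (a - 1) - a) > 0" using 3 assms
      by (intro mult_pos_pos) (auto simp: algebra_simps)
    thus ?thesis using z g1 unfolding g_def by (simp add: algebra_simps)
  qed
qed

lemma powr_strict_convex:
  fixes u v t a :: real
  assumes "u \<ge> 0" "v \<ge> 0" "u \<noteq> v" "0 < t" "t < 1" "a > 1"
  shows "((1 - t) * u + t * v) powr a < (1 - t) * u powr a + t * v powr a"
proof -
  define m where "m = (1 - t) * u + t * v"
  have mpos: "m > 0"
  proof (cases "u = 0")
    case True
    hence "v > 0" using assms by auto
    thus ?thesis using True assms by (simp add: m_def)
  next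
    case False
    hence "(1 - t) * u > 0" using assms by simp
    moreover have "t * v \<ge> 0" using assms by simp
    ultimately show ?thesis by (simp add: m_def)
  qed
  have d1: "m - u = t * (v - u)" and d2: "m - v = (1 - t) * (u - v)" by (simp_all add: m_def algebra_simps)
  have n1: "t * (v - u) \<noteq> 0" and n2: "(1 - t) * (u - v) \<noteq> 0" using assms by auto
  have um: "u \<noteq> m" using d1 n1 by force
  have vm: "v \<noteq> m" using d2 n2 by force
  have key: "m powr a + a * m powr a * (w / m - 1) \<le> w powr a" and
       keys: "w \<noteq> m \<Longrightarrow> m powr a + a * m powr a * (w / m - 1) < w powr a"
    if "w \<ge> 0" for w
  proof -
    have e: "w powr a = m powr a * (w / m) powr a" using mpos that
      by (simp add: powr_divide)
    have mp: "m powr a > 0" using mpos by simp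
    show "w \<noteq> m \<Longrightarrow> m powr a + a * m powr a * (w / m - 1) < w powr a"
    proof -
      assume "w \<noteq> m"
      hence "1 + a * (w / m - 1) < (w / m) powr a" using that mpos assms
        by (intro bern_powr) auto
      hence "m powr a * (1 + a * (w / m - 1)) < m powr a * (w / m) powr a"
        using mp by simp
      thus ?thesis using e by (simp add: algebra_simps)
    qed
    show "m powr a + a * m powr a * (w / m - 1) \<le> w powr a"
    proof (cases "w = m")
      case True thus ?thesis by simp
    next
      case False thus ?thesis using \<open>w \<noteq> m \<Longrightarrow> _\<close> by fastforce
    qed
  qed
  have "(1 - t) * (m powr a + a * m powr a * (u / m - 1)) + t * (m powr a + a * m powr a * (v / m - 1))
        = m powr a + a * m powr a * (((1 - t) * u + t * v) / m - 1)"
    by (simp add: algebra_simps add_divide_distrib diff_divide_distrib)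
  also have "\<dots> = m powr a" using mpos unfolding m_def[symmetric] by simp
  finally have eq: "(1 - t) * (m powr a + a * m powr a * (u / m - 1)) + t * (m powr a + a * m powr a * (v / m - 1)) = m powr a" .
  have "(1 - t) * (m powr a + a * m powr a * (u / m - 1)) < (1 - t) * u powr a"
    using keys[OF assms(1) um] assms by simp
  moreover have "t * (m powr a + a * m powr a * (v / m - 1)) \<le> t * v powr a"
    using key[OF assms(2)] assms by simp
  ultimately show ?thesis using eq unfolding m_def by linarith
qed

lemma sub_rc: "x \<in> S \<Longrightarrow> x \<in> rc S"
  unfolding rc_iff by (auto intro: hull_inc)

lemma ri_sub: "x \<in> ri S \<Longrightarrow> x \<in> S"
  unfolding ri_iff by auto

lemma sconv_convex:
  assumes "strictly_convex_set S"
  shows "convex S"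
  unfolding convex_def
proof (intro ballI allI impI)
  fix x y u v assume xy: "x \<in> S" "y \<in> S" and uv: "(0::real) \<le> u" "0 \<le> v" "u + v = 1"
  show "u *\<^sub>R x + v *\<^sub>R y \<in> S"
  proof (cases "x = y \<or> u = 0 \<or> v = 0")
    case True
    thus ?thesis using xy uv by (auto simp: scaleR_left_distrib[symmetric])
  next
    case False
    hence "u *\<^sub>R x + v *\<^sub>R y \<in> open_segment x y" using uv
      by (auto simp: in_segment intro!: exI[of _ v])
    moreover have "open_segment x y \<subseteq> ri S" using assms xy False sub_rc
      unfolding strictly_convex_set_def by blast
    ultimately show ?thesis using ri_sub by blast
  qed
qed

lemma sqcD:
  "strictly_quasi_convex_on C g \<Longrightarrow> x \<in> C \<Longrightarrow> y \<in> C \<Longrightarrow> x \<noteq> y \<Longrightarrow> 0 < t \<Longrightarrow> t < 1 \<Longrightarrow>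
    g ((1 - t) *\<^sub>R x + t *\<^sub>R y) < max (g x) (g y)"
  unfolding strictly_quasi_convex_on_def by blast

lemma sqc_convex: "strictly_quasi_convex_on C g \<Longrightarrow> convex C"
  unfolding strictly_quasi_convex_on_def by blast

locale SC =
  fixes C :: "'a::{real_vector,topological_space} set" and f :: "'a \<Rightarrow> real"
  assumes tvs: "tvs_ops_continuous TYPE('a)"
    and cone: "is_cone C"
    and sconv: "strictly_convex_set C"
    and nonneg: "\<forall>x\<in>C. 0 \<le> f x"
    and homog: "\<forall>x\<in>C. \<forall>c::real. c > 0 \<longrightarrow> f (c *\<^sub>R x) = c * f x"
begin

lemma convC: "convex C" using sconv_convex[OF sconv] .

lemma coneI: "x \<in> C \<Longrightarrow> c > 0 \<Longrightarrow> c *\<^sub>R x \<in> C"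
  using cone unfolding is_cone_def by auto

lemma hom: "x \<in> C \<Longrightarrow> c > 0 \<Longrightarrow> f (c *\<^sub>R x) = c * f x"
  using homog by auto

lemma nn: "x \<in> C \<Longrightarrow> 0 \<le> f x" using nonneg by auto

lemma f0: "0 \<in> C \<Longrightarrow> f 0 = 0"
  using hom[of 0 2] by simp

lemma nz_ri: assumes "x \<in> C" "x \<noteq> 0" shows "x \<in> ri C"
proof -
  have a: "(1/2) *\<^sub>R x \<in> C" "2 *\<^sub>R x \<in> C" using coneI assms by auto
  have ne: "(1/2) *\<^sub>R x \<noteq> 2 *\<^sub>R x" using assms(2) by simp
  have "x = (1 - 1/3) *\<^sub>R ((1/2) *\<^sub>R x) + (1/3) *\<^sub>R (2 *\<^sub>R x)"
    by (simp add: scaleR_left_distrib[symmetric])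
  hence "x \<in> open_segment ((1/2) *\<^sub>R x) (2 *\<^sub>R x)"
    using ne by (auto simp: in_segment intro!: exI[of _ "1/3"])
  thus ?thesis using sconv a ne sub_rc unfolding strictly_convex_set_def by blast
qed

lemma sqc_zero:
  assumes sq: "strictly_quasi_convex_on C f" and x: "x \<in> C" "f x = 0"
  shows "x = 0"
proof (rule ccontr)
  assume nz: "x \<noteq> 0"
  have x2: "2 *\<^sub>R x \<in> C" using coneI x by auto
  have ne: "x \<noteq> 2 *\<^sub>R x"
  proof
    assume "x = 2 *\<^sub>R x"
    hence "1 *\<^sub>R x = 2 *\<^sub>R x" by simp
    thus False using nz by (simp only: scaleR_cancel_right) simp
  qed
  have "f ((1 - 1/2) *\<^sub>R x + (1/2) *\<^sub>R (2 *\<^sub>R x)) < max (f x) (f (2 *\<^sub>R x))"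
    by (rule sqcD[OF sq x(1) x2 ne]) auto
  moreover have "(1 - 1/2) *\<^sub>R x + (1/2) *\<^sub>R (2 *\<^sub>R x) = (3/2) *\<^sub>R x"
  proof -
    have "(3/2::real) = 1/2 + 1" by simp
    hence "(3/2) *\<^sub>R x = (1/2) *\<^sub>R x + 1 *\<^sub>R x" by (simp only: scaleR_left_distrib)
    thus ?thesis by simp
  qed
  ultimately show False using hom[OF x(1), of "3/2"] hom[OF x(1), of 2] x by simp
qed

lemma sqc_conv_ineq:
  assumes sq: "strictly_quasi_convex_on C f" and x: "x \<in> C" and y: "y \<in> C"
    and t: "0 < t" "t < 1"
  shows "f ((1 - t) *\<^sub>R x + t *\<^sub>R y) \<le> (1 - t) * f x + t * f y"
proof -
  have cv: "convex C" using sq unfolding strictly_quasi_convex_on_def by auto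
  consider "f x = 0" | "f y = 0" | "f x > 0" "f y > 0" using nn x y by force
  thus ?thesis
  proof cases
    case 1
    hence "x = 0" using sqc_zero sq x by auto
    thus ?thesis using hom[OF y, of t] t 1 by simp
  next
    case 2
    hence "y = 0" using sqc_zero sq y by auto
    thus ?thesis using hom[OF x, of "1 - t"] t 2 by simp
  next
    case 3
    define a where "a = (1 - t) * f x"
    define b where "b = t * f y"
    define s where "s = a + b"
    have a0: "a > 0" using 3 t by (simp add: a_def)
    have b0: "b > 0" using 3 t by (simp add: b_def)
    have ab: "a > 0" "b > 0" "s > 0" using a0 b0 by (auto simp: s_def)
    define x' where "x' = (1 / f x) *\<^sub>R x"
    define y' where "y' = (1 / f y) *\<^sub>R y"
    have x'C: "x' \<in> C" and y'C: "y' \<in> C" using coneI x y 3 by (auto simp: x'_def y'_def)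
    have fx': "f x' = 1" and fy': "f y' = 1" using hom x y 3 by (auto simp: x'_def y'_def)
    define t' where "t' = b / s"
    have t': "0 < t'" "t' < 1" using ab by (auto simp: t'_def s_def)
    define w where "w = (1 - t') *\<^sub>R x' + t' *\<^sub>R y'"
    have wC: "w \<in> C" using cv x'C y'C t' unfolding w_def
      by (intro convexD) auto
    have fw: "f w \<le> 1"
    proof (cases "x' = y'")
      case True thus ?thesis using fx' by (simp add: w_def scaleR_left_distrib[symmetric])
    next
      case False
      hence "f w < max (f x') (f y')" unfolding w_def by (rule sqcD[OF sq x'C y'C _ t'])
      thus ?thesis using fx' fy' by simp
    qed
    have "1 - t' = a / s" using ab by (simp add: t'_def s_def field_simps)
    hence "s *\<^sub>R w = (1 - t) *\<^sub>R x + t *\<^sub>R y" using ab 3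
      by (simp add: w_def t'_def x'_def y'_def a_def b_def scaleR_add_right)
    hence "f ((1 - t) *\<^sub>R x + t *\<^sub>R y) = s * f w" using hom[OF wC ab(3)] by simp
    also have "\<dots> \<le> s" using fw ab by simp
    finally show ?thesis by (simp add: s_def a_def b_def)
  qed
qed

lemma one_two:
  assumes "strictly_convex_fun_on C (\<lambda>x. f x powr \<alpha>)" "\<alpha> > 1"
  shows "strictly_quasi_convex_on C f"
  unfolding strictly_quasi_convex_on_def
proof (intro conjI ballI allI impI)
  show "convex C" using assms unfolding strictly_convex_fun_on_def by auto
next
  fix x y t assume xy: "x \<in> C" "y \<in> C" "x \<noteq> y" and t: "(0::real) < t" "t < 1"
  define M where "M = max (f x) (f y)"
  have M0: "f x \<le> M" "f y \<le> M" by (auto simp: M_def)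
  have "f x powr \<alpha> \<le> M powr \<alpha>" "f y powr \<alpha> \<le> M powr \<alpha>"
    using M0 nn xy assms(2) by (auto intro!: powr_mono2)
  hence "(1 - t) * f x powr \<alpha> \<le> (1 - t) * M powr \<alpha>" "t * f y powr \<alpha> \<le> t * M powr \<alpha>"
    using t by (auto intro!: mult_left_mono)
  hence le: "(1 - t) * f x powr \<alpha> + t * f y powr \<alpha> \<le> M powr \<alpha>" by (simp add: algebra_simps)
  have lt: "f ((1 - t) *\<^sub>R x + t *\<^sub>R y) powr \<alpha> < (1 - t) * f x powr \<alpha> + t * f y powr \<alpha>"
    using assms(1) xy t unfolding strictly_convex_fun_on_def by blast
  show "f ((1 - t) *\<^sub>R x + t *\<^sub>R y) < max (f x) (f y)"
  proof (rule ccontr)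
    assume "\<not> ?thesis"
    hence "M \<le> f ((1 - t) *\<^sub>R x + t *\<^sub>R y)" unfolding M_def by (metis not_less)
    hence "M powr \<alpha> \<le> f ((1 - t) *\<^sub>R x + t *\<^sub>R y) powr \<alpha>"
      using M0 nn[OF xy(1)] assms(2) by (intro powr_mono2) auto
    thus False using le lt by linarith
  qed
qed

lemma two_one:
  assumes sq: "strictly_quasi_convex_on C f" and a: "\<alpha> > 1"
  shows "strictly_convex_fun_on C (\<lambda>x. f x powr \<alpha>)"
  unfolding strictly_convex_fun_on_def
proof (intro conjI ballI allI impI)
  show "convex C" using sq unfolding strictly_quasi_convex_on_def by auto
next
  fix x y t assume xy: "x \<in> C" "y \<in> C" "x \<noteq> y" and t: "(0::real) < t" "t < 1"
  define z where "z = (1 - t) *\<^sub>R x + t *\<^sub>R y"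
  have zC: "z \<in> C" unfolding z_def
    by (rule convexD[OF sqc_convex[OF sq] xy(1,2)]) (use t in auto)
  have le: "f z \<le> (1 - t) * f x + t * f y" using sqc_conv_ineq[OF sq xy(1,2) t] by (simp add: z_def)
  have fz0: "0 \<le> f z" using nn zC .
  show "f ((1 - t) *\<^sub>R x + t *\<^sub>R y) powr \<alpha> < (1 - t) * f x powr \<alpha> + t * f y powr \<alpha>"
  proof (cases "f x = f y")
    case True
    have "f z < max (f x) (f y)" unfolding z_def by (rule sqcD[OF sq xy t])
    hence "f z powr \<alpha> < f x powr \<alpha>" using True fz0 a by (intro powr_less_mono2) auto
    thus ?thesis using True by (simp add: z_def algebra_simps)
  next
    case False
    have "f z powr \<alpha> \<le> ((1 - t) * f x + t * f y) powr \<alpha>" using le fz0 a by (intro powr_mono2) auto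
    also have "\<dots> < (1 - t) * f x powr \<alpha> + t * f y powr \<alpha>"
      using False nn xy t a by (intro powr_strict_convex) auto
    finally show ?thesis by (simp add: z_def)
  qed
qed

end
lemma seg_scale:
  fixes x :: "'a::real_vector"
  assumes "x \<noteq> 0" "0 < c1" "c1 < 1" "1 < c2"
  shows "x \<in> open_segment (c1 *\<^sub>R x) (c2 *\<^sub>R x)"
proof -
  define t where "t = (1 - c1) / (c2 - c1)"
  have t: "0 < t" "t < 1" using assms by (auto simp: t_def field_simps)
  have "t * (c2 - c1) = 1 - c1" using assms by (simp add: t_def)
  hence "(1 - t) * c1 + t * c2 = 1" by (simp add: algebra_simps)
  hence "(1 - t) *\<^sub>R (c1 *\<^sub>R x) + t *\<^sub>R (c2 *\<^sub>R x) = x"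
    by (simp add: scaleR_left_distrib[symmetric])
  moreover have "c1 *\<^sub>R x \<noteq> c2 *\<^sub>R x" using assms by simp
  ultimately show ?thesis using t unfolding in_segment by (intro conjI exI[of _ t]) auto
qed

context SC begin

abbreviation S where "S r \<equiv> sublevel C f r"

lemma S_mem: "x \<in> S r \<longleftrightarrow> x \<in> C \<and> f x \<le> r" by (simp add: sublevel_def)

lemma S_sub: "S r \<subseteq> C" by (auto simp: sublevel_def)

lemma C_sub_hull:
  assumes r: "r > 0" and y: "y \<in> C"
  shows "y \<in> affine hull (S r)"
proof (cases "f y \<le> r")
  case True thus ?thesis using y by (auto intro: hull_inc simp: S_mem)
next
  case False
  hence fy: "f y > r" by simp
  define c where "c = r / f y"
  have c: "c > 0" using r fy by (simp add: c_def)
  have y1: "c *\<^sub>R y \<in> S r" using hom[OF y c] coneI[OF y c] fy r by (simp add: S_mem c_def)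
  have y2: "(c/2) *\<^sub>R y \<in> S r" using hom[OF y, of "c/2"] coneI[OF y, of "c/2"] c fy r
    by (simp add: S_mem c_def)
  define a where "a = 2 / c - 1"
  have "a * c + (1 - a) * (c / 2) = 1" using c by (simp add: a_def field_simps)
  hence "a *\<^sub>R (c *\<^sub>R y) + (1 - a) *\<^sub>R ((c/2) *\<^sub>R y) = y"
    by (simp add: scaleR_left_distrib[symmetric])
  moreover have "a *\<^sub>R (c *\<^sub>R y) + (1 - a) *\<^sub>R ((c/2) *\<^sub>R y) \<in> affine hull (S r)"
    by (rule mem_affine[OF affine_affine_hull]) (use y1 y2 in \<open>auto intro: hull_inc\<close>)
  ultimately show ?thesis by simp
qed

lemma span_eq: "0 \<in> C \<Longrightarrow> affine hull C = span C"
  by (rule affine_hull_span_0) (auto intro: hull_inc)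

lemma collinear:
  assumes z: "0 \<in> C" and pointed: "\<forall>x\<in>C. -x \<in> C \<longrightarrow> x = 0"
    and v: "v \<in> C" and u: "u \<in> C" and vu: "v - u \<in> C"
  shows "\<exists>t. 0 \<le> t \<and> t \<le> 1 \<and> u = t *\<^sub>R v"
proof (cases "u = 0")
  case True thus ?thesis by (intro exI[of _ 0]) auto
next
  case unz: False
  have hull: "affine hull C = span C" using span_eq z .
  have inspan: "x \<in> span C" if "x \<in> C" for x using that by (rule span_base)
  define I where "I = {s::real. 0 \<le> s \<and> v - s *\<^sub>R u \<in> C}"
  have convI: "s' \<in> I" if "s \<in> I" "0 \<le> s'" "s' \<le> s" for s s'
  proof (cases "s = 0")
    case True thus ?thesis using that by auto
  next
    case False
    hence sp: "s > 0" using that by (auto simp: I_def)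
    have "(1 - s'/s) *\<^sub>R v + (s'/s) *\<^sub>R (v - s *\<^sub>R u) \<in> C"
      using that sp v by (intro convexD[OF convC]) (auto simp: I_def field_simps)
    moreover have "(1 - s'/s) *\<^sub>R v + (s'/s) *\<^sub>R (v - s *\<^sub>R u) = v - s' *\<^sub>R u"
      using sp by (simp add: algebra_simps)
    ultimately show ?thesis using that by (simp add: I_def)
  qed
  have I01: "0 \<in> I" "1 \<in> I" using v vu by (auto simp: I_def)
  show ?thesis
  proof (cases "bdd_above I")
    case False
    have allI: "s \<in> I" if "s \<ge> 0" for s
    proof -
      obtain s' where "s' \<in> I" "s < s'" using False unfolding bdd_above_def
        by (meson linorder_not_le)
      thus ?thesis using convI that by auto
    qed
    have mu1: "-u \<in> affine hull C" unfolding hull using inspan[OF u] by (simp add: span_neg)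
    have mu2: "\<exists>y\<in>C. y \<in> U" if U: "open U" "-u \<in> U" for U
    proof -
      obtain e where e: "e > 0" "\<forall>s. \<bar>s - 0\<bar> < e \<longrightarrow> -u + s *\<^sub>R v \<in> U"
        using line_open[OF tvs U(1), of "-u" 0 v] U(2) by auto
      have s: "e/2 > 0" using e by simp
      have "v - (1/(e/2)) *\<^sub>R u \<in> C" using allI[of "1/(e/2)"] s by (auto simp: I_def)
      hence "(e/2) *\<^sub>R (v - (1/(e/2)) *\<^sub>R u) \<in> C" using coneI s by blast
      moreover have "(e/2) *\<^sub>R (v - (1/(e/2)) *\<^sub>R u) = -u + (e/2) *\<^sub>R v"
        using s by (simp add: algebra_simps)
      moreover have "-u + (e/2) *\<^sub>R v \<in> U" using e s by auto
      ultimately show "\<exists>y\<in>C. y \<in> U" by auto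
    qed
    have mu: "-u \<in> rc C" unfolding rc_iff using mu1 mu2 by blast
    have "u \<noteq> -u"
    proof
      assume "u = -u"
      hence "u + u = 0" by (metis add.right_inverse)
      hence "2 *\<^sub>R u = 0" by (simp add: scaleR_2)
      thus False using unz by simp
    qed
    hence "open_segment u (-u) \<subseteq> ri C" using sconv mu sub_rc[OF u]
      unfolding strictly_convex_set_def by blast
    moreover have "0 \<in> open_segment u (-u)"
      using \<open>u \<noteq> -u\<close> unfolding in_segment by (intro conjI exI[of _ "1/2"]) (auto simp: algebra_simps)
    ultimately have "0 \<in> ri C" by blast
    then obtain Ov where Ov: "open Ov" "0 \<in> Ov" "Ov \<inter> affine hull C \<subseteq> C" unfolding ri_iff by auto
    obtain d where d: "d > 0" "\<forall>s. \<bar>s - 0\<bar> < d \<longrightarrow> 0 + s *\<^sub>R (-u) \<in> Ov"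
      using line_open[OF tvs Ov(1), of 0 0 "-u"] Ov(2) by auto
    have "(d/2) *\<^sub>R (-u) \<in> Ov" using d by auto
    moreover have "(d/2) *\<^sub>R (-u) \<in> affine hull C" unfolding hull using inspan[OF u]
      by (simp add: span_neg span_scale)
    ultimately have "(d/2) *\<^sub>R (-u) \<in> C" using Ov by blast
    hence "-((d/2) *\<^sub>R u) \<in> C" by simp
    moreover have "(d/2) *\<^sub>R u \<in> C" using coneI[OF u] d by simp
    ultimately have "(d/2) *\<^sub>R u = 0" using pointed by blast
    thus ?thesis using d unz by simp
  next
    case True
    define s0 where "s0 = Sup I"
    have s0ge: "1 \<le> s0" unfolding s0_def using True I01 by (intro cSup_upper) auto
    have below: "s \<in> I" if "0 \<le> s" "s < s0" for s
    proof -
      have "I \<noteq> {}" using I01 by blast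
      hence "\<exists>x\<in>I. s < x" using less_cSup_iff[of I s] True that(2) unfolding s0_def by blast
      then obtain s' where "s' \<in> I" "s < s'" by blast
      thus ?thesis using convI that by auto
    qed
    define p where "p = v - s0 *\<^sub>R u"
    have "p = 0"
    proof (rule ccontr)
      assume pnz: "p \<noteq> 0"
      have krc: "k *\<^sub>R p \<in> rc C" if k: "k > 0" for k
        unfolding rc_iff
      proof (intro conjI allI impI)
        show "k *\<^sub>R p \<in> affine hull C" unfolding hull p_def using inspan[OF u] inspan[OF v]
          by (intro span_scale span_diff) auto
      next
        fix U :: "'a set" assume U: "open U" "k *\<^sub>R p \<in> U"
        have eqk: "k *\<^sub>R v + s *\<^sub>R (-(k *\<^sub>R u)) = k *\<^sub>R (v - s *\<^sub>R u)" for s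
          by (simp add: algebra_simps)
        have "k *\<^sub>R v + s0 *\<^sub>R (-(k *\<^sub>R u)) \<in> U" using U(2) unfolding eqk p_def .
        from line_open[OF tvs U(1) this]
        obtain e where e: "e > 0" "\<forall>s. \<bar>s - s0\<bar> < e \<longrightarrow> k *\<^sub>R v + s *\<^sub>R (-(k *\<^sub>R u)) \<in> U"
          by blast
        define s where "s = max 0 (s0 - e/2)"
        have s: "0 \<le> s" "s < s0" "\<bar>s - s0\<bar> < e" using s0ge e by (auto simp: s_def)
        have "k *\<^sub>R (v - s *\<^sub>R u) \<in> C" using below[OF s(1,2)] coneI k by (auto simp: I_def)
        moreover have "k *\<^sub>R (v - s *\<^sub>R u) \<in> U" using e(2) s(3) eqk by metis
        ultimately show "\<exists>y\<in>C. y \<in> U" by blast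
      qed
      have "p \<in> open_segment ((1/2) *\<^sub>R p) (2 *\<^sub>R p)" by (rule seg_scale[OF pnz]) auto
      moreover have "(1/2) *\<^sub>R p \<noteq> 2 *\<^sub>R p" using pnz by simp
      ultimately have "p \<in> ri C" using sconv krc[of "1/2"] krc[of 2]
        unfolding strictly_convex_set_def by force
      then obtain Ov where Ov: "open Ov" "p \<in> Ov" "Ov \<inter> affine hull C \<subseteq> C" unfolding ri_iff by auto
      have "v + s0 *\<^sub>R (-u) \<in> Ov" using Ov(2) by (simp add: p_def)
      from line_open[OF tvs Ov(1) this]
      obtain e where e: "e > 0" "\<forall>s. \<bar>s - s0\<bar> < e \<longrightarrow> v + s *\<^sub>R (-u) \<in> Ov"
        by blast
      have "v + (s0 + e/2) *\<^sub>R (-u) \<in> Ov" using e by auto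
      moreover have "v + (s0 + e/2) *\<^sub>R (-u) \<in> affine hull C" unfolding hull
        using inspan[OF u] inspan[OF v] by (simp add: span_diff span_scale)
      ultimately have "v - (s0 + e/2) *\<^sub>R u \<in> C" using Ov by auto
      hence "s0 + e/2 \<in> I" using s0ge e(1) by (auto simp: I_def)
      hence "s0 + e/2 \<le> s0" unfolding s0_def using True by (rule cSup_upper)
      thus False using e by simp
    qed
    hence "u = (1/s0) *\<^sub>R v" using s0ge by (simp add: p_def)
    thus ?thesis using s0ge by (intro exI[of _ "1/s0"]) auto
  qed
qed

end
context SC begin

lemma ri_lt:
  assumes r: "r > 0" and z: "z \<in> ri (S r)"
  shows "f z < r"
proof -
  have zS: "z \<in> S r" using ri_sub z .
  hence zC: "z \<in> C" and fz: "f z \<le> r" by (auto simp: S_mem)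
  obtain U where U: "open U" "z \<in> U" "U \<inter> affine hull (S r) \<subseteq> S r" using z unfolding ri_iff by auto
  have "0 + 1 *\<^sub>R z \<in> U" using U by simp
  from line_open[OF tvs U(1) this]
  obtain e where e: "e > 0" "\<forall>s. \<bar>s - 1\<bar> < e \<longrightarrow> 0 + s *\<^sub>R z \<in> U" by blast
  define s where "s = 1 + e/2"
  have s: "s > 1" "\<bar>s - 1\<bar> < e" using e by (auto simp: s_def)
  have "s *\<^sub>R z \<in> U" using e s by auto
  moreover have "s *\<^sub>R z \<in> C" using coneI zC s by auto
  ultimately have "s *\<^sub>R z \<in> S r" using U C_sub_hull[OF r] by blast
  hence "s * f z \<le> r" using hom[OF zC, of s] s by (simp add: S_mem)
  show "f z < r"
  proof (rule ccontr)
    assume "\<not> f z < r"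
    hence "f z = r" using fz by simp
    thus False using \<open>s * f z \<le> r\<close> s r by simp
  qed
qed

lemma three_sqc:
  assumes ssc: "strictly_sub_convex_on C f" and z0: "{x\<in>C. f x = 0} \<subseteq> {0}"
  shows "strictly_quasi_convex_on C f"
  unfolding strictly_quasi_convex_on_def
proof (intro conjI ballI allI impI convC)
  fix x y t assume xy: "x \<in> C" "y \<in> C" "x \<noteq> y" and t: "(0::real) < t" "t < 1"
  define r where "r = max (f x) (f y)"
  have r: "r > 0"
  proof (rule ccontr)
    assume "\<not> r > 0"
    hence "f x = 0" "f y = 0" using nn[OF xy(1)] nn[OF xy(2)] unfolding r_def by (auto simp: max_def split: if_splits)
    hence "x = 0" "y = 0" using z0 xy by auto
    thus False using xy by simp
  qed
  have xyS: "x \<in> S r" "y \<in> S r" using xy by (auto simp: S_mem r_def)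
  have "open_segment x y \<subseteq> ri (S r)" using ssc xyS sub_rc xy(3)
    unfolding strictly_sub_convex_on_def strictly_convex_set_def by blast
  moreover have "(1 - t) *\<^sub>R x + t *\<^sub>R y \<in> open_segment x y"
    using xy t unfolding in_segment by auto
  ultimately have "f ((1 - t) *\<^sub>R x + t *\<^sub>R y) < r" using ri_lt[OF r] by blast
  thus "f ((1 - t) *\<^sub>R x + t *\<^sub>R y) < max (f x) (f y)" by (simp add: r_def)
qed

lemma ri_nbhd:
  assumes r: "r > 0" and w: "w \<in> ri (S r)"
  shows "\<exists>U. open U \<and> w \<in> U \<and> (\<forall>u\<in>C. u \<in> U \<longrightarrow> f u \<le> r)"
proof -
  obtain U where U: "open U" "w \<in> U" "U \<inter> affine hull (S r) \<subseteq> S r" using w unfolding ri_iff by auto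
  show ?thesis using U C_sub_hull[OF r] by (intro exI[of _ U]) (auto simp: S_mem)
qed

lemma three_cont:
  assumes ssc: "strictly_sub_convex_on C f" and z0: "{x\<in>C. f x = 0} \<subseteq> {0}"
  shows "continuous_on C f"
  unfolding continuous_on_topological
proof (intro ballI allI impI)
  have scs: "strictly_convex_set (S r)" for r using ssc unfolding strictly_sub_convex_on_def by blast
  have inri: "x \<in> ri (S r)" if "a \<in> S r" "b \<in> S r" "a \<noteq> b" "x \<in> open_segment a b" for a b x r
    using scs[of r] that sub_rc unfolding strictly_convex_set_def by blast
  fix w B assume w: "w \<in> C" and B: "open B" "f w \<in> B"
  obtain e where e: "e > 0" "\<forall>y. dist y (f w) < e \<longrightarrow> y \<in> B"
    using B unfolding open_dist by blast
  have low: "\<exists>U. open U \<and> w \<in> U \<and> (\<forall>u\<in>C. u \<in> U \<longrightarrow> f u > f w - e)"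
  proof (cases "f w = 0")
    case True thus ?thesis using nn e by (intro exI[of _ UNIV]) force
  next
    case False
    hence fw: "f w > 0" using nn w by force
    have wnz: "w \<noteq> 0" using fw w f0 by auto
    define r where "r = max (f w - e) (f w / 2)"
    have r: "0 < r" "r < f w" "f w - e \<le> r" using fw e by (auto simp: r_def)
    have "w \<notin> rc (S r)"
    proof
      assume wrc: "w \<in> rc (S r)"
      define c where "c = r / f w"
      have c: "0 < c" "c < 1" using r fw by (auto simp: c_def)
      have yS: "c *\<^sub>R w \<in> S r" using hom[OF w c(1)] coneI[OF w c(1)] fw by (simp add: S_mem c_def)
      have ne: "w \<noteq> c *\<^sub>R w" using c wnz by (metis scaleR_one scaleR_cancel_right less_irrefl)
      have "open_segment w (c *\<^sub>R w) \<subseteq> ri (S r)" using scs[of r] wrc sub_rc[OF yS] ne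
        unfolding strictly_convex_set_def by blast
      moreover have "(1 - 1/2) *\<^sub>R w + (1/2) *\<^sub>R (c *\<^sub>R w) \<in> open_segment w (c *\<^sub>R w)"
        using ne unfolding in_segment by (intro conjI exI[of _ "1/2"]) auto
      moreover have eqp: "(1 - 1/2) *\<^sub>R w + (1/2) *\<^sub>R (c *\<^sub>R w) = ((1 + c)/2) *\<^sub>R w"
        by (simp add: scaleR_left_distrib[symmetric] add_divide_distrib)
      ultimately have "((1 + c)/2) *\<^sub>R w \<in> S r" using ri_sub by auto
      hence "(1 + c)/2 * f w \<le> r" using hom[OF w, of "(1+c)/2"] c by (simp add: S_mem)
      moreover have "(1 + c)/2 * f w = (f w + r)/2" using fw by (simp add: c_def field_simps)
      ultimately show False using r by simp
    qed
    moreover have "w \<in> affine hull (S r)" using C_sub_hull[OF r(1) w] .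
    ultimately obtain U where U: "open U" "w \<in> U" "\<not>(\<exists>y\<in>S r. y \<in> U)"
      unfolding rc_iff by blast
    show ?thesis using U r by (intro exI[of _ U]) (force simp: S_mem)
  qed
  define r where "r = f w + e/2"
  have r: "r > 0" "r < f w + e" using nn[OF w] e by (auto simp: r_def)
  have up: "\<exists>U. open U \<and> w \<in> U \<and> (\<forall>u\<in>C. u \<in> U \<longrightarrow> f u < f w + e)"
  proof (cases "w = 0")
    case False
    hence fw: "f w > 0" using z0 w nn by force
    define k where "k = r / f w"
    have k: "k > 1" using fw e by (simp add: k_def r_def field_simps)
    have a: "(1/2) *\<^sub>R w \<in> S r" using hom[OF w, of "1/2"] coneI[OF w, of "1/2"] fw r
      by (simp add: S_mem r_def)
    have b: "k *\<^sub>R w \<in> S r" using hom[OF w, of k] coneI[OF w, of k] fw k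
      by (simp add: S_mem k_def)
    have "w \<in> open_segment ((1/2) *\<^sub>R w) (k *\<^sub>R w)" by (rule seg_scale[OF False]) (use k in auto)
    moreover have "(1/2) *\<^sub>R w \<noteq> k *\<^sub>R w" using False k by simp
    ultimately have "w \<in> ri (S r)" using inri a b by blast
    then obtain U where "open U" "w \<in> U" "\<forall>u\<in>C. u \<in> U \<longrightarrow> f u \<le> r" using ri_nbhd r by blast
    thus ?thesis using r by (intro exI[of _ U]) force
  next
    case True
    hence z: "0 \<in> C" using w by simp
    have fw0: "f w = 0" using True f0 z by simp
    show ?thesis
    proof (cases "\<exists>x\<in>C. x \<noteq> 0 \<and> -x \<in> C")
      case True
      then obtain x where x: "x \<in> C" "x \<noteq> 0" "-x \<in> C" by blast
      have fx: "f x > 0" "f (-x) > 0" using x z0 nn by force+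
      define c where "c = r / (f x + f (-x))"
      have c: "c > 0" using fx r by (simp add: c_def)
      have cs: "c * (f x + f (-x)) = r" using fx by (simp add: c_def)
      have "c * f x \<le> c * (f x + f (-x))" "c * f (-x) \<le> c * (f x + f (-x))"
        using c fx by (auto intro!: mult_left_mono)
      hence le1: "c * f x \<le> r" "c * f (-x) \<le> r" using cs by auto
      have a: "c *\<^sub>R x \<in> S r" using hom[OF x(1) c] coneI[OF x(1) c] le1
        by (simp add: S_mem)
      have b: "c *\<^sub>R (-x) \<in> S r" using hom[OF x(3) c] coneI[OF x(3) c] le1
        by (simp add: S_mem)
      have ne: "c *\<^sub>R x \<noteq> c *\<^sub>R (-x)"
      proof
        assume "c *\<^sub>R x = c *\<^sub>R (-x)"
        hence "x = -x" using c scaleR_cancel_left[of c x "-x"] by auto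
        hence "x + x = 0" by (metis add.right_inverse)
        hence "2 *\<^sub>R x = 0" by (simp add: scaleR_2)
        thus False using x by simp
      qed
      have "0 \<in> open_segment (c *\<^sub>R x) (c *\<^sub>R (-x))"
        using ne unfolding in_segment by (intro conjI exI[of _ "1/2"]) (auto simp: algebra_simps)
      hence "0 \<in> ri (S r)" using inri a b ne by blast
      then obtain U where "open U" "0 \<in> U" "\<forall>u\<in>C. u \<in> U \<longrightarrow> f u \<le> r" using ri_nbhd r by blast
      thus ?thesis using r \<open>w = 0\<close> by (intro exI[of _ U]) force
    next
      case False
      hence pointed: "\<forall>x\<in>C. -x \<in> C \<longrightarrow> x = 0" by blast
      show ?thesis
      proof (cases "C = {0}")
        case True thus ?thesis using f0 z e fw0 by (intro exI[of _ UNIV]) auto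
      next
        case False
        then obtain x where x: "x \<in> C" "x \<noteq> 0" using z by blast
        have fx: "f x > 0" using x z0 nn by force
        define c where "c = e / (2 * f x)"
        have c: "c > 0" using fx e by (simp add: c_def)
        define v where "v = c *\<^sub>R x"
        have vC: "v \<in> C" using coneI[OF x(1) c] by (simp add: v_def)
        have fv: "f v = e/2" using hom[OF x(1) c] fx by (simp add: v_def c_def)
        have vnz: "v \<noteq> 0" using c x by (simp add: v_def)
        have "v \<in> ri C" using nz_ri vC vnz by blast
        then obtain Ov where Ov: "open Ov" "v \<in> Ov" "Ov \<inter> affine hull C \<subseteq> C" unfolding ri_iff by auto
        have "(-1) *\<^sub>R 0 + v \<in> Ov" using Ov by simp
        from aff_open[OF tvs Ov(1) this]
        obtain W where W: "open W" "0 \<in> W" "\<forall>y\<in>W. (-1) *\<^sub>R y + v \<in> Ov" by blast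
        have "\<forall>u\<in>C. u \<in> W \<longrightarrow> f u < f w + e"
        proof (intro ballI impI)
          fix u assume u: "u \<in> C" "u \<in> W"
          have "v - u \<in> Ov" using W u by simp
          moreover have "v - u \<in> affine hull C" unfolding span_eq[OF z]
            using vC u by (intro span_diff span_base) auto
          ultimately have "v - u \<in> C" using Ov by blast
          then obtain t where t: "0 \<le> t" "t \<le> 1" "u = t *\<^sub>R v"
            using collinear[OF z pointed vC u(1)] by blast
          have "f u \<le> e/2"
          proof (cases "t = 0")
            case True thus ?thesis using t f0 z e by simp
          next
            case False
            hence "f u = t * (e/2)" using t hom[OF vC, of t] fv by simp
            also have "\<dots> \<le> e/2" using t e by (simp add: mult_le_cancel_right1)
            finally show ?thesis .
          qed
          thus "f u < f w + e" using fw0 e by simp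
        qed
        thus ?thesis using W \<open>w = 0\<close> by blast
      qed
    qed
  qed
  obtain U1 where U1: "open U1" "w \<in> U1" "\<forall>u\<in>C. u \<in> U1 \<longrightarrow> f u > f w - e" using low by blast
  obtain U2 where U2: "open U2" "w \<in> U2" "\<forall>u\<in>C. u \<in> U2 \<longrightarrow> f u < f w + e" using up by blast
  show "\<exists>A. open A \<and> w \<in> A \<and> (\<forall>y\<in>C. y \<in> A \<longrightarrow> f y \<in> B)"
  proof (intro exI[of _ "U1 \<inter> U2"] conjI ballI impI)
    show "open (U1 \<inter> U2)" using U1 U2 by auto
    show "w \<in> U1 \<inter> U2" using U1 U2 by auto
  next
    fix y assume "y \<in> C" "y \<in> U1 \<inter> U2"
    hence "dist (f y) (f w) < e" using U1 U2 by (auto simp: dist_real_def abs_less_iff)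
    thus "f y \<in> B" using e by blast
  qed
qed

end
context SC begin

lemma rc_mono_C: assumes x: "x \<in> rc (S r)" shows "x \<in> rc C"
proof -
  have x1: "x \<in> affine hull (S r)" and x2: "\<forall>U. open U \<longrightarrow> x \<in> U \<longrightarrow> (\<exists>y\<in>S r. y \<in> U)"
    using x unfolding rc_iff by (rule conjunct1, rule conjunct2)
  have h: "affine hull (S r) \<subseteq> affine hull C" by (rule hull_mono[OF S_sub])
  have "\<forall>U. open U \<longrightarrow> x \<in> U \<longrightarrow> (\<exists>y\<in>C. y \<in> U)"
  proof (intro allI impI)
    fix U :: "'a set" assume "open U" "x \<in> U"
    then obtain y where "y \<in> S r" "y \<in> U" using x2 by blast
    thus "\<exists>y\<in>C. y \<in> U" using S_sub by blast
  qed
  thus ?thesis unfolding rc_iff by (intro conjI subsetD[OF h x1])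
qed

lemma two_three:
  assumes cont: "continuous_on C f" and sq: "strictly_quasi_convex_on C f"
  shows "strictly_sub_convex_on C f"
  unfolding strictly_sub_convex_on_def strictly_convex_set_def
proof (intro allI ballI impI subsetI)
  fix r x y w assume x: "x \<in> rc (S r)" and y: "y \<in> rc (S r)" and xy: "x \<noteq> y"
    and w: "w \<in> open_segment x y"
  show "w \<in> ri (S r)"
  proof (cases "r > 0")
    case False
    have "S r \<subseteq> {0}"
    proof
      fix u assume "u \<in> S r"
      hence u: "u \<in> C" "f u \<le> r" by (auto simp: S_mem)
      hence "f u = 0" using nn[OF u(1)] False by linarith
      thus "u \<in> {0}" using sqc_zero[OF sq u(1)] by simp
    qed
    moreover have "affine hull {0::'a} = {0}" by (rule hull_same) (rule affine_sing)
    ultimately have "affine hull (S r) \<subseteq> {0}" using hull_mono[of "S r" "{0}" affine] by blast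
    moreover have "x \<in> affine hull (S r)" using x unfolding rc_iff by (rule conjunct1)
    moreover have "y \<in> affine hull (S r)" using y unfolding rc_iff by (rule conjunct1)
    ultimately have "x = 0" "y = 0" by blast+
    hence "x = y" by simp
    thus ?thesis using xy by simp
  next
    case True
    hence r: "r > 0" .
    have cv: "convex C" using sqc_convex[OF sq] .
    have xC: "x \<in> rc C" "y \<in> rc C" using rc_mono_C x y by auto
    have segri: "open_segment x y \<subseteq> ri C" using sconv xC xy unfolding strictly_convex_set_def by blast
    have segC: "z \<in> C" if "z \<in> open_segment x y" for z using segri that ri_sub by blast
    have le: "f z \<le> r" if z: "z \<in> open_segment x y" for z
    proof (rule ccontr)
      assume "\<not> f z \<le> r"
      hence fz: "f z \<in> {r<..}" by simp
      obtain t where t: "0 < t" "t < 1" "z = (1 - t) *\<^sub>R x + t *\<^sub>R y" using z unfolding in_segment by blast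
      have "open {r<..}" by simp
      from cont[unfolded continuous_on_topological, rule_format, OF segC[OF z] this fz]
      obtain A where A: "open A" "z \<in> A" "\<forall>u\<in>C. u \<in> A \<longrightarrow> f u \<in> {r<..}" by blast
      have "t *\<^sub>R y + (1 - t) *\<^sub>R x \<in> A" using A t by (simp add: add.commute)
      from aff_open[OF tvs A(1) this]
      obtain V where V: "open V" "y \<in> V" "\<forall>q\<in>V. t *\<^sub>R q + (1 - t) *\<^sub>R x \<in> A" by blast
      obtain y' where y': "y' \<in> S r" "y' \<in> V" using y V unfolding rc_iff by blast
      have "(1 - t) *\<^sub>R x + t *\<^sub>R y' \<in> A" using V y' by (simp add: add.commute)
      from aff_open[OF tvs A(1) this]
      obtain V' where V': "open V'" "x \<in> V'" "\<forall>q\<in>V'. (1 - t) *\<^sub>R q + t *\<^sub>R y' \<in> A" by blast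
      obtain x' where x': "x' \<in> S r" "x' \<in> V'" using x V' unfolding rc_iff by blast
      define q where "q = (1 - t) *\<^sub>R x' + t *\<^sub>R y'"
      have qA: "q \<in> A" using V' x' by (simp add: q_def)
      have x'C: "x' \<in> C" and y'C: "y' \<in> C" and fx': "f x' \<le> r" and fy': "f y' \<le> r"
        using x' y' by (auto simp: S_mem)
      have qC: "q \<in> C" unfolding q_def by (rule convexD[OF cv x'C y'C]) (use t in auto)
      have "f q \<le> r"
      proof (cases "x' = y'")
        case True thus ?thesis using fx' by (simp add: q_def scaleR_left_distrib[symmetric])
      next
        case False
        have "f q < max (f x') (f y')" unfolding q_def by (rule sqcD[OF sq x'C y'C False t(1,2)])
        thus ?thesis using fx' fy' by simp
      qed
      thus False using A qA qC by auto
    qed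
    obtain t where t: "0 < t" "t < 1" "w = (1 - t) *\<^sub>R x + t *\<^sub>R y" using w unfolding in_segment by blast
    define w1 where "w1 = (1 - t/2) *\<^sub>R x + (t/2) *\<^sub>R y"
    define w2 where "w2 = (1 - (1 + t)/2) *\<^sub>R x + ((1 + t)/2) *\<^sub>R y"
    have w1s: "w1 \<in> open_segment x y" using xy t unfolding in_segment w1_def
      by (intro conjI exI[of _ "t/2"]) auto
    have w2s: "w2 \<in> open_segment x y" using xy t unfolding in_segment w2_def
      by (intro conjI exI[of _ "(1 + t)/2"]) auto
    have e1: "w1 = x + (t/2) *\<^sub>R (y - x)" by (simp add: w1_def algebra_simps)
    have e2: "w2 = x + ((1 + t)/2) *\<^sub>R (y - x)" by (simp add: w2_def algebra_simps)
    have "w2 - w1 = ((1 + t)/2) *\<^sub>R (y - x) - (t/2) *\<^sub>R (y - x)" unfolding e1 e2 by simp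
    also have "\<dots> = ((1 + t)/2 - t/2) *\<^sub>R (y - x)" by (simp only: scaleR_diff_left)
    also have "(1 + t)/2 - t/2 = (1/2::real)" by (simp add: field_simps)
    finally have dw: "w2 - w1 = (1/2) *\<^sub>R (y - x)" .
    have ne: "w1 \<noteq> w2"
    proof
      assume "w1 = w2"
      hence "(1/2) *\<^sub>R (y - x) = 0" using dw by simp
      thus False using xy by simp
    qed
    have "(1 - t) *\<^sub>R w1 + t *\<^sub>R w2
        = ((1 - t) + t) *\<^sub>R x + ((1 - t) * (t/2) + t * ((1 + t)/2)) *\<^sub>R (y - x)"
      unfolding e1 e2 scaleR_add_right scaleR_scaleR scaleR_left_distrib by (simp add: add_ac)
    also have "((1 - t) * (t/2) + t * ((1 + t)/2)) = t" by (simp add: field_simps)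
    also have "((1 - t) + t) = (1::real)" by simp
    also have "1 *\<^sub>R x + t *\<^sub>R (y - x) = w" unfolding t(3) by (simp add: algebra_simps)
    finally have weq: "w = (1 - t) *\<^sub>R w1 + t *\<^sub>R w2" by simp
    have "f w < max (f w1) (f w2)" unfolding weq
      by (rule sqcD[OF sq segC[OF w1s] segC[OF w2s] ne t(1,2)])
    hence fw: "f w < r" using le[OF w1s] le[OF w2s] by simp
    have wri: "w \<in> ri C" using segri w by blast
    then obtain U1 where U1: "open U1" "w \<in> U1" "U1 \<inter> affine hull C \<subseteq> C" unfolding ri_iff by auto
    have "open {..<r}" by simp
    moreover have "f w \<in> {..<r}" using fw by simp
    ultimately have "\<exists>A. open A \<and> w \<in> A \<and> (\<forall>u\<in>C. u \<in> A \<longrightarrow> f u \<in> {..<r})"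
      using cont[unfolded continuous_on_topological, rule_format, OF segC[OF w]] by blast
    then obtain U2 where U2: "open U2" "w \<in> U2" "\<forall>u\<in>C. u \<in> U2 \<longrightarrow> f u \<in> {..<r}" by blast
    have F1: "(U1 \<inter> U2) \<inter> affine hull (S r) \<subseteq> S r"
    proof
      fix u assume u: "u \<in> (U1 \<inter> U2) \<inter> affine hull (S r)"
      have "affine hull (S r) \<subseteq> affine hull C" by (rule hull_mono[OF S_sub])
      hence "u \<in> C" using u U1 by blast
      thus "u \<in> S r" using U2 u by (auto simp: S_mem)
    qed
    have F2: "w \<in> S r" using segC[OF w] fw by (simp add: S_mem)
    have F3: "open (U1 \<inter> U2)" using U1(1) U2(1) by (rule open_Int)
    have F4: "w \<in> U1 \<inter> U2" using U1(2) U2(2) by (rule IntI)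
    show ?thesis unfolding ri_iff
      by (intro conjI exI[of _ "U1 \<inter> U2"] F1 F2 F3 F4)
  qed
qed

end
theorem mainTheorem4:
  fixes C :: "'a::{real_vector,topological_space} set"
    and f :: "'a \<Rightarrow> real"
    and \<alpha> :: real
  assumes tvs: "tvs_ops_continuous TYPE('a)"
    and nonempty: "C \<noteq> {}"
    and cone: "is_cone C"
    and sconv: "strictly_convex_set C"
    and nonneg: "\<forall>x\<in>C. 0 \<le> f x"
    and homog: "\<forall>x\<in>C. \<forall>c::real. c > 0 \<longrightarrow> f (c *\<^sub>R x) = c * f x"
    and alpha: "\<alpha> > 1"
  shows "((continuous_on C f \<and> strictly_convex_fun_on C (\<lambda>x. f x powr \<alpha>))
            \<longleftrightarrow> (continuous_on C f \<and> strictly_quasi_convex_on C f))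
       \<and> ((continuous_on C f \<and> strictly_quasi_convex_on C f)
            \<longleftrightarrow> (strictly_sub_convex_on C f \<and> {x\<in>C. f x = 0} \<subseteq> {0}))"
proof -
  interpret SC C f using tvs cone sconv nonneg homog by unfold_locales
  have A: "(continuous_on C f \<and> strictly_convex_fun_on C (\<lambda>x. f x powr \<alpha>))
            \<longleftrightarrow> (continuous_on C f \<and> strictly_quasi_convex_on C f)"
    using one_two[OF _ alpha] two_one[OF _ alpha] by blast
  have B: "(continuous_on C f \<and> strictly_quasi_convex_on C f)
            \<longleftrightarrow> (strictly_sub_convex_on C f \<and> {x\<in>C. f x = 0} \<subseteq> {0})"
  proof
    assume H: "continuous_on C f \<and> strictly_quasi_convex_on C f"
    have "{x\<in>C. f x = 0} \<subseteq> {0}" using sqc_zero H by blast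
    thus "strictly_sub_convex_on C f \<and> {x\<in>C. f x = 0} \<subseteq> {0}" using two_three H by blast
  next
    assume H: "strictly_sub_convex_on C f \<and> {x\<in>C. f x = 0} \<subseteq> {0}"
    show "continuous_on C f \<and> strictly_quasi_convex_on C f"
      using three_cont[of] three_sqc H by blast
  qed
  show ?thesis using A B by blast
qed
end
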